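(* Let $N_1,N_3,J,L\in\mathbb{N}$ and let $\hat{\mathcal{X}}\in\mathbb{R}^{N_1\times J\times N_3\times L}$ be a real fourth-order tensor with slices $\hat{\mathcal{X}}_{jl}\in\mathbb{R}^{N_1\times N_3}$ given by $(\hat{\mathcal{X}}_{jl})_{ik}=\hat{\mathcal{X}}_{ijkl}$. Consider all factorizations $\hat{\mathcal{X}}_{jl}=\mathbf{U}(\mathbf{R}_j\mathbf{T}_l)\mathbf{V}^\top$ for all $j=1,\dots,J$, $l=1,\dots,L$, where $D\in\mathbb{N}$ is arbitrary, $\mathbf{U}\in\mathbb{R}^{N_1\times D}$, $\mathbf{V}\in\mathbb{R}^{N_3\times D}$, and $\mathbf{R}_j,\mathbf{T}_l\in\mathbb{R}^{D\times D}$ are real diagonal matrices. Then $$\|\hat{\mathcal{X}}\|_*=\min_{\substack{D,\ \mathbf{U},\mathbf{V},(\mathbf{R}_j),(\mathbf{T}_l):\\ \hat{\mathcal{X}}_{jl}=\mathbf{U}(\mathbf{R}_j\mathbf{T}_l)\mathbf{V}^\top\ \forall j,l}}\ \frac{1}{4\sqrt{JL}}\sum_{l=1}^{L}\sum_{j=1}^{J}\Big(\|\mathbf{U}\mathbf{R}_j\|_F^2+\|\mathbf{V}\mathbf{T}_l^\top\|_F^2+\|\mathbf{U}\mathbf{T}_l\|_F^2+\|\mathbf{V}\mathbf{R}_j^\top\|_F^2\Big).$$ Moreover, every factorization attaining this minimum satisfies, for every $d\in\{1,\dots,D\}$, $$\sqrt{L}\,\|\mathbf{u}_{:d}\|_2\|\mathbf{r}_{:d}\|_2=\sqrt{J}\,\|\mathbf{v}_{:d}\|_2\|\mathbf{t}_{:d}\|_2\quad\text{and}\quad\sqrt{J}\,\|\mathbf{u}_{:d}\|_2\|\mathbf{t}_{:d}\|_2=\sqrt{L}\,\|\mathbf{v}_{:d}\|_2\|\mathbf{r}_{:d}\|_2,$$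 where $\mathbf{u}_{:d},\mathbf{v}_{:d}$ are the $d$-th columns of $\mathbf{U},\mathbf{V}$, $\mathbf{r}_{:d}\in\mathbb{R}^J$ is the $d$-th column of $\widetilde{\mathbf{R}}\in\mathbb{R}^{J\times D}$ with $\widetilde{\mathbf{R}}(j,d)=\mathbf{R}_j(d,d)$, and $\mathbf{t}_{:d}\in\mathbb{R}^L$ is the $d$-th column of $\widetilde{\mathbf{T}}\in\mathbb{R}^{L\times D}$ with $\widetilde{\mathbf{T}}(l,d)=\mathbf{T}_l(d,d)$.
   Context: $\|\cdot\|_F$ is the Frobenius norm and $\|\cdot\|_2$ the Euclidean norm. The tensor nuclear 2-norm of a real tensor $\mathcal{A}\in\mathbb{R}^{n_1}\otimes\mathbb{R}^{n_2}\otimes\mathbb{R}^{n_3}\otimes\mathbb{R}^{n_4}$ is $\|\mathcal{A}\|_*=\min\big\{\sum_{i=1}^r\prod_{k=1}^4\|\mathbf{a}_{k,i}\|_2:\ \mathcal{A}=\sum_{i=1}^r\mathbf{a}_{1,i}\otimes\mathbf{a}_{2,i}\otimes\mathbf{a}_{3,i}\otimes\mathbf{a}_{4,i},\ r\in\mathbb{N},\ \mathbf{a}_{k,i}\in\mathbb{R}^{n_k}\big\}$, where $\otimes$ is the outer product. The factorization condition is equivalent to $\hat{\mathcal{X}}=\sum_{d=1}^D\mathbf{u}_{:d}\otimes\mathbf{r}_{:d}\otimes\mathbf{v}_{:d}\otimes\mathbf{t}_{:d}$. *)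

theory Defs
  imports Complex_Main
begin

text \<open>Vectors in R^n are represented as functions nat => real, with only the
entries at indices 0..n-1 relevant.  Fourth-order tensors in
R^{N1 x N2 x N3 x N4} are functions nat => nat => nat => nat => real with
only indices below the bounds relevant.\<close>

definition vnorm2 :: "nat \<Rightarrow> (nat \<Rightarrow> real) \<Rightarrow> real" where
  "vnorm2 n a = sqrt (\<Sum>i<n. (a i)\<^sup>2)"

definition nuclear_norm4 ::
  "nat \<Rightarrow> nat \<Rightarrow> nat \<Rightarrow> nat \<Rightarrow> (nat \<Rightarrow> nat \<Rightarrow> nat \<Rightarrow> nat \<Rightarrow> real) \<Rightarrow> real" where
  "nuclear_norm4 n1 n2 n3 n4 X = Inf
     {s. \<exists>(r::nat) (a1::(nat\<Rightarrow>nat\<Rightarrow>real)) (a2::(nat\<Rightarrow>nat\<Rightarrow>real)) (a3::(nat\<Rightarrow>nat\<Rightarrow>real)) (a4::(nat\<Rightarrow>nat\<Rightarrow>real)).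
        s = (\<Sum>i<r. vnorm2 n1 (a1 i) * vnorm2 n2 (a2 i) * vnorm2 n3 (a3 i) * vnorm2 n4 (a4 i)) \<and>
        (\<forall>p<n1. \<forall>q<n2. \<forall>s<n3. \<forall>t<n4.
           X p q s t = (\<Sum>i<r. a1 i p * a2 i q * a3 i s * a4 i t))}"

text \<open>Factorization data: U is N1 x D, V is N3 x D; the diagonal matrices
R_j, T_l are represented through Rt (J x D) with Rt j d = R_j(d,d) and
Tt (L x D) with Tt l d = T_l(d,d).\<close>
definition is_factorization ::
  "nat \<Rightarrow> nat \<Rightarrow> nat \<Rightarrow> nat \<Rightarrow> (nat \<Rightarrow> nat \<Rightarrow> nat \<Rightarrow> nat \<Rightarrow> real) \<Rightarrow>
   nat \<Rightarrow> (nat \<Rightarrow> nat \<Rightarrow> real) \<Rightarrow> (nat \<Rightarrow> nat \<Rightarrow> real) \<Rightarrow>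
   (nat \<Rightarrow> nat \<Rightarrow> real) \<Rightarrow> (nat \<Rightarrow> nat \<Rightarrow> real) \<Rightarrow> bool" where
  "is_factorization N1 J N3 L X D U V Rt Tt \<longleftrightarrow>
     (\<forall>i<N1. \<forall>j<J. \<forall>k<N3. \<forall>l<L.
        X i j k l = (\<Sum>d<D. U i d * (Rt j d * Tt l d) * V k d))"

definition fact_objective ::
  "nat \<Rightarrow> nat \<Rightarrow> nat \<Rightarrow> nat \<Rightarrow> nat \<Rightarrow> (nat \<Rightarrow> nat \<Rightarrow> real) \<Rightarrow> (nat \<Rightarrow> nat \<Rightarrow> real) \<Rightarrow>
   (nat \<Rightarrow> nat \<Rightarrow> real) \<Rightarrow> (nat \<Rightarrow> nat \<Rightarrow> real) \<Rightarrow> real" where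
  "fact_objective N1 J N3 L D U V Rt Tt =
     1 / (4 * sqrt (real J * real L)) *
     (\<Sum>l<L. \<Sum>j<J.
        (\<Sum>i<N1. \<Sum>d<D. (U i d * Rt j d)\<^sup>2)
      + (\<Sum>k<N3. \<Sum>d<D. (V k d * Tt l d)\<^sup>2)
      + (\<Sum>i<N1. \<Sum>d<D. (U i d * Tt l d)\<^sup>2)
      + (\<Sum>k<N3. \<Sum>d<D. (V k d * Rt j d)\<^sup>2))"

end

theory Submission imports Defs "HOL-Analysis.Analysis" begin

lemma vnorm2_nonneg: "vnorm2 n a \<ge> 0" by (simp add: vnorm2_def sum_nonneg)
lemma vnorm2_sq: "(vnorm2 n a)\<^sup>2 = (\<Sum>p<n. (a p)\<^sup>2)"
  by (simp add: vnorm2_def sum_nonneg)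
lemma vnorm2_scale: "vnorm2 n (\<lambda>p. c * a p) = \<bar>c\<bar> * vnorm2 n a"
proof -
  have "(\<Sum>p<n. (c * a p)\<^sup>2) = c\<^sup>2 * (\<Sum>p<n. (a p)\<^sup>2)"
    by (simp add: power_mult_distrib sum_distrib_left)
  then show ?thesis by (simp add: vnorm2_def real_sqrt_mult)
qed
lemma vnorm2_cong: "(\<And>p. p < n \<Longrightarrow> a p = b p) \<Longrightarrow> vnorm2 n a = vnorm2 n b"
  by (simp add: vnorm2_def)
lemma vnorm2_zero_iff: "vnorm2 n a = 0 \<longleftrightarrow> (\<forall>p<n. a p = 0)"
  by (auto simp: vnorm2_def sum_nonneg_eq_0_iff)
lemma abs_le_vnorm2: "p < n \<Longrightarrow> \<bar>a p\<bar> \<le> vnorm2 n a"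
proof -
  assume "p < n"
  then have "(a p)\<^sup>2 \<le> (\<Sum>p<n. (a p)\<^sup>2)"
    by (intro member_le_sum) auto
  then show ?thesis unfolding vnorm2_def by (metis real_sqrt_abs real_sqrt_le_iff)
qed

lemma lin_dep:
  fixes v :: "'i \<Rightarrow> 'x \<Rightarrow> real"
  assumes "finite I" "finite K" "card I < card K"
  shows "\<exists>\<mu>. (\<exists>i\<in>K. \<mu> i \<noteq> 0) \<and> (\<forall>x\<in>I. (\<Sum>i\<in>K. \<mu> i * v i x) = 0)"
  using assms
proof (induction I arbitrary: K v rule: finite_induct)
  case empty
  then have "K \<noteq> {}" by auto
  then show ?case by (rule_tac x="\<lambda>_. 1" in exI) auto
next
  case (insert x0 I)
  show ?case
  proof (cases "\<forall>i\<in>K. v i x0 = 0")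
    case True
    from insert have "card I < card K" by simp
    with insert.IH[OF insert.prems(1) this, of v] obtain \<mu> where
      "\<exists>i\<in>K. \<mu> i \<noteq> 0" "\<forall>x\<in>I. (\<Sum>i\<in>K. \<mu> i * v i x) = 0" by blast
    then show ?thesis using True by (rule_tac x=\<mu> in exI) auto
  next
    case False
    then obtain k where k: "k \<in> K" "v k x0 \<noteq> 0" by blast
    define K' where "K' = K - {k}"
    have fK': "finite K'" using insert by (simp add: K'_def)
    have cK': "card I < card K'" using insert k by (simp add: K'_def)
    define w where "w i x = v i x - v i x0 / v k x0 * v k x" for i x
    obtain \<nu> where nu: "\<exists>i\<in>K'. \<nu> i \<noteq> 0" "\<forall>x\<in>I. (\<Sum>i\<in>K'. \<nu> i * w i x) = 0"
      using insert.IH[OF fK' cK', of w] by blast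
    define \<mu> where "\<mu> = \<nu>(k := - (\<Sum>i\<in>K'. \<nu> i * v i x0) / v k x0)"
    have key: "(\<Sum>i\<in>K. \<mu> i * v i x) = (\<Sum>i\<in>K'. \<nu> i * w i x)" for x
    proof -
      have "(\<Sum>i\<in>K. \<mu> i * v i x) = \<mu> k * v k x + (\<Sum>i\<in>K'. \<mu> i * v i x)"
        using k insert.prems by (simp add: K'_def sum.remove)
      also have "(\<Sum>i\<in>K'. \<mu> i * v i x) = (\<Sum>i\<in>K'. \<nu> i * v i x)"
        by (rule sum.cong) (auto simp: \<mu>_def K'_def)
      also have "(\<Sum>i\<in>K'. \<nu> i * w i x) = (\<Sum>i\<in>K'. \<nu> i * v i x) - (\<Sum>i\<in>K'. \<nu> i * v i x0) / v k x0 * v k x"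
        by (simp add: w_def right_diff_distrib sum_subtractf sum_distrib_right sum_divide_distrib mult.assoc)
      ultimately show ?thesis by (simp add: \<mu>_def)
    qed
    show ?thesis
    proof (intro exI conjI ballI)
      show "\<exists>i\<in>K. \<mu> i \<noteq> 0" using nu(1) by (auto simp: \<mu>_def K'_def)
    next
      fix x assume "x \<in> insert x0 I"
      then show "(\<Sum>i\<in>K. \<mu> i * v i x) = 0"
        using nu(2) k(2) by (auto simp: key w_def)
    qed
  qed
qed


definition decK :: "nat \<Rightarrow> nat \<Rightarrow> nat \<Rightarrow> nat \<Rightarrow> (nat \<Rightarrow> nat \<Rightarrow> nat \<Rightarrow> nat \<Rightarrow> real) \<Rightarrow> 'i set \<Rightarrow> ('i \<Rightarrow> nat \<Rightarrow> real) \<Rightarrow> ('i \<Rightarrow> nat \<Rightarrow> real) \<Rightarrow> ('i \<Rightarrow> nat \<Rightarrow> real) \<Rightarrow> ('i \<Rightarrow> nat \<Rightarrow> real) \<Rightarrow> bool" where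
  "decK N1 J N3 L X K a1 a2 a3 a4 \<longleftrightarrow> (\<forall>p<N1. \<forall>q<J. \<forall>s<N3. \<forall>t<L.
     X p q s t = (\<Sum>i\<in>K. a1 i p * a2 i q * a3 i s * a4 i t))"

definition cterm :: "nat \<Rightarrow> nat \<Rightarrow> nat \<Rightarrow> nat \<Rightarrow> ('i \<Rightarrow> nat \<Rightarrow> real) \<Rightarrow> ('i \<Rightarrow> nat \<Rightarrow> real) \<Rightarrow> ('i \<Rightarrow> nat \<Rightarrow> real) \<Rightarrow> ('i \<Rightarrow> nat \<Rightarrow> real) \<Rightarrow> 'i \<Rightarrow> real" where
  "cterm N1 J N3 L a1 a2 a3 a4 i = vnorm2 N1 (a1 i) * vnorm2 J (a2 i) * vnorm2 N3 (a3 i) * vnorm2 L (a4 i)"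

definition costK :: "nat \<Rightarrow> nat \<Rightarrow> nat \<Rightarrow> nat \<Rightarrow> 'i set \<Rightarrow> ('i \<Rightarrow> nat \<Rightarrow> real) \<Rightarrow> ('i \<Rightarrow> nat \<Rightarrow> real) \<Rightarrow> ('i \<Rightarrow> nat \<Rightarrow> real) \<Rightarrow> ('i \<Rightarrow> nat \<Rightarrow> real) \<Rightarrow> real" where
  "costK N1 J N3 L K a1 a2 a3 a4 = (\<Sum>i\<in>K. cterm N1 J N3 L a1 a2 a3 a4 i)"

lemma cterm_nonneg: "cterm N1 J N3 L a1 a2 a3 a4 i \<ge> 0"
  by (simp add: cterm_def vnorm2_nonneg)

definition idxA :: "nat \<Rightarrow> nat \<Rightarrow> nat \<Rightarrow> nat \<Rightarrow> (nat \<times> nat \<times> nat \<times> nat) set" where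
  "idxA N1 J N3 L = {..<N1} \<times> {..<J} \<times> {..<N3} \<times> {..<L}"

lemma card_idxA: "card (idxA N1 J N3 L) = N1 * J * N3 * L"
  by (simp add: idxA_def card_cartesian_product)

lemma reduce_step:
  assumes fin: "finite K" and cK: "card K > N1 * J * N3 * L"
    and dec: "decK N1 J N3 L X K a1 a2 a3 a4"
  shows "\<exists>k\<in>K. \<exists>b1. decK N1 J N3 L X (K - {k}) b1 a2 a3 a4 \<and>
           costK N1 J N3 L (K - {k}) b1 a2 a3 a4 \<le> costK N1 J N3 L K a1 a2 a3 a4"
proof -
  define v where "v i x = (case x of (p,q,s,t) \<Rightarrow> a1 i p * a2 i q * a3 i s * a4 i t)" for i x
  define c where "c = cterm N1 J N3 L a1 a2 a3 a4"
  have c0: "c i \<ge> 0" for i by (simp add: c_def cterm_nonneg)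
  obtain \<mu> where mu: "\<exists>i\<in>K. \<mu> i \<noteq> 0" "\<forall>x\<in>idxA N1 J N3 L. (\<Sum>i\<in>K. \<mu> i * v i x) = 0"
    using lin_dep[of "idxA N1 J N3 L" K v] fin cK by (auto simp: card_idxA idxA_def)
  have "\<exists>\<nu>. (\<exists>i\<in>K. \<nu> i > 0) \<and> (\<Sum>i\<in>K. \<nu> i * c i) \<ge> 0 \<and> (\<forall>x\<in>idxA N1 J N3 L. (\<Sum>i\<in>K. \<nu> i * v i x) = 0)"
  proof (cases "(\<Sum>i\<in>K. \<mu> i * c i) \<ge> 0 \<and> (\<exists>i\<in>K. \<mu> i > 0)")
    case True then show ?thesis using mu by blast
  next
    case False
    have m2: "\<forall>x\<in>idxA N1 J N3 L. (\<Sum>i\<in>K. (- \<mu> i) * v i x) = 0"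
      using mu(2) by (simp add: sum_negf)
    have "\<exists>i\<in>K. - \<mu> i > 0 \<and> (\<Sum>i\<in>K. (-\<mu> i) * c i) \<ge> 0"
    proof (cases "(\<Sum>i\<in>K. \<mu> i * c i) \<ge> 0")
      case True
      with False have np: "\<forall>i\<in>K. \<mu> i \<le> 0" by auto
      then have "(\<Sum>i\<in>K. \<mu> i * c i) \<le> 0"
        by (intro sum_nonpos) (simp add: c0 mult_nonpos_nonneg)
      with True have "(\<Sum>i\<in>K. (-\<mu> i) * c i) \<ge> 0" by (simp add: sum_negf)
      moreover obtain i where "i\<in>K" "\<mu> i \<noteq> 0" using mu by blast
      ultimately show ?thesis using np by force
    next
      case F2: False
      then have s: "(\<Sum>i\<in>K. (-\<mu> i) * c i) \<ge> 0" by (simp add: sum_negf)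
      have "\<exists>i\<in>K. - \<mu> i > 0"
      proof (rule ccontr)
        assume "\<not> ?thesis"
        then have "(\<Sum>i\<in>K. \<mu> i * c i) \<ge> 0"
          by (intro sum_nonneg) (auto simp: c0)
        with F2 show False by simp
      qed
      with s show ?thesis by blast
    qed
    then show ?thesis using m2 by (rule_tac x="\<lambda>i. - \<mu> i" in exI) auto
  qed
  then obtain \<nu> where nu: "\<exists>i\<in>K. \<nu> i > 0" "(\<Sum>i\<in>K. \<nu> i * c i) \<ge> 0"
      "\<forall>x\<in>idxA N1 J N3 L. (\<Sum>i\<in>K. \<nu> i * v i x) = 0" by blast
  define P where "P = {i\<in>K. \<nu> i > 0}"
  have fP: "finite P" "P \<noteq> {}" using fin nu(1) by (auto simp: P_def)
  define m where "m = Max (\<nu> ` P)"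
  have "m \<in> \<nu> ` P" using fP by (simp add: m_def)
  then obtain k where k: "k \<in> P" "\<nu> k = m" by force
  have kK: "k \<in> K" and m0: "m > 0" using k by (auto simp: P_def)
  have le_m: "\<nu> i \<le> m" if "i \<in> K" for i
  proof (cases "\<nu> i > 0")
    case True then have "i \<in> P" using that by (simp add: P_def)
    then show ?thesis using fP by (simp add: m_def)
  next
    case False then show ?thesis using m0 by simp
  qed
  define f where "f i = 1 - \<nu> i / m" for i
  have f0: "f i \<ge> 0" if "i \<in> K" for i
    using le_m[OF that] m0 by (simp add: f_def field_simps)
  have fk: "f k = 0" using k m0 by (simp add: f_def)
  define b1 where "b1 i p = f i * a1 i p" for i p
  have D1: "decK N1 J N3 L X (K - {k}) b1 a2 a3 a4"
      unfolding decK_def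
    proof (intro allI impI)
      fix p q s t assume pq: "p < N1" "q < J" "s < N3" "t < L"
      then have x: "(p,q,s,t) \<in> idxA N1 J N3 L" by (simp add: idxA_def)
      have "(\<Sum>i\<in>K - {k}. b1 i p * a2 i q * a3 i s * a4 i t) = (\<Sum>i\<in>K. f i * v i (p,q,s,t))"
        using fk sum.remove[OF fin kK, of "\<lambda>i. f i * v i (p,q,s,t)"] by (simp add: b1_def v_def mult.assoc)
      also have "\<dots> = (\<Sum>i\<in>K. v i (p,q,s,t)) - (\<Sum>i\<in>K. \<nu> i * v i (p,q,s,t)) / m"
        by (simp add: f_def left_diff_distrib sum_subtractf sum_divide_distrib)
      also have "\<dots> = X p q s t"
        using bspec[OF nu(3) x] dec pq by (simp add: decK_def v_def)
      finally show "X p q s t = (\<Sum>i\<in>K - {k}. b1 i p * a2 i q * a3 i s * a4 i t)" by simp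
    qed
      have ct: "cterm N1 J N3 L b1 a2 a3 a4 i = f i * c i" if "i \<in> K" for i
        using f0[OF that] by (simp add: cterm_def c_def b1_def[abs_def] vnorm2_scale)
      have "costK N1 J N3 L (K - {k}) b1 a2 a3 a4 = (\<Sum>i\<in>K - {k}. f i * c i)"
        by (simp add: costK_def ct)
      also have "\<dots> = (\<Sum>i\<in>K. f i * c i)"
        using fin kK fk by (simp add: sum.remove[of K k "\<lambda>i. f i * c i"])
      also have "\<dots> = (\<Sum>i\<in>K. c i) - (\<Sum>i\<in>K. \<nu> i * c i) / m"
        by (simp add: f_def left_diff_distrib sum_subtractf sum_divide_distrib)
      also have "\<dots> \<le> (\<Sum>i\<in>K. c i)" using nu(2) m0 by simp
      finally have D2: "costK N1 J N3 L (K - {k}) b1 a2 a3 a4 \<le> costK N1 J N3 L K a1 a2 a3 a4"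
        by (simp add: costK_def c_def)
  show ?thesis using D1 D2 kK by blast
qed

lemma reduce:
  assumes "finite K" "decK N1 J N3 L X K a1 a2 a3 a4"
  shows "\<exists>K' b1. finite K' \<and> card K' \<le> N1 * J * N3 * L \<and> decK N1 J N3 L X K' b1 a2 a3 a4 \<and>
           costK N1 J N3 L K' b1 a2 a3 a4 \<le> costK N1 J N3 L K a1 a2 a3 a4"
  using assms
proof (induction "card K" arbitrary: K a1 rule: less_induct)
  case less
  show ?case
  proof (cases "card K \<le> N1 * J * N3 * L")
    case True then show ?thesis using less.prems by blast
  next
    case False
    then obtain k b1 where kb: "k \<in> K" "decK N1 J N3 L X (K - {k}) b1 a2 a3 a4"
      "costK N1 J N3 L (K - {k}) b1 a2 a3 a4 \<le> costK N1 J N3 L K a1 a2 a3 a4"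
      using reduce_step[OF less.prems(1) _ less.prems(2)] by force
    have "card (K - {k}) < card K" using card_Diff1_less[OF less.prems(1) kb(1)] .
    from less.hyps[OF this _ kb(2)] less.prems(1) kb(3) show ?thesis by force
  qed
qed


lemma sum_reindex_pad:
  fixes g :: "'i \<Rightarrow> real"
  assumes "bij_betw h {0..<card K} K" "card K \<le> M"
  shows "(\<Sum>i<M. if i < card K then g (h i) else 0) = (\<Sum>x\<in>K. g x)"
proof -
  have "(\<Sum>i<M. if i < card K then g (h i) else 0) = (\<Sum>i<card K. if i < card K then g (h i) else 0)"
    using assms(2) by (intro sum.mono_neutral_right) auto
  also have "\<dots> = (\<Sum>i\<in>{0..<card K}. g (h i))" by (simp add: lessThan_atLeast0)
  also have "\<dots> = (\<Sum>x\<in>K. g x)" by (rule sum.reindex_bij_betw[OF assms(1)])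
  finally show ?thesis .
qed

lemma to_lessThan:
  fixes K :: "'i set" and a1 a2 a3 a4 :: "'i \<Rightarrow> nat \<Rightarrow> real"
  assumes "finite K" "card K \<le> M" "decK N1 J N3 L X K a1 a2 a3 a4"
  shows "\<exists>b1 b2 b3 b4. decK N1 J N3 L X {..<M} b1 b2 b3 b4 \<and>
     costK N1 J N3 L {..<M} b1 b2 b3 b4 = costK N1 J N3 L K a1 a2 a3 a4"
proof -
  obtain h where h: "bij_betw h {0..<card K} K" using ex_bij_betw_nat_finite[OF assms(1)] by blast
  define b1 where "b1 i = (if i < card K then a1 (h i) else (\<lambda>_. 0))" for i
  define b2 where "b2 i = (if i < card K then a2 (h i) else (\<lambda>_. 0))" for i
  define b3 where "b3 i = (if i < card K then a3 (h i) else (\<lambda>_. 0))" for i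
  define b4 where "b4 i = (if i < card K then a4 (h i) else (\<lambda>_. 0))" for i
  have z: "vnorm2 n (\<lambda>_. 0) = 0" for n by (simp add: vnorm2_def)
  have "decK N1 J N3 L X {..<M} b1 b2 b3 b4"
    unfolding decK_def
  proof (intro allI impI)
    fix p q s t assume "p < N1" "q < J" "s < N3" "t < L"
    then have "X p q s t = (\<Sum>x\<in>K. a1 x p * a2 x q * a3 x s * a4 x t)"
      using assms(3) by (simp add: decK_def)
    also have "\<dots> = (\<Sum>i<M. if i < card K then a1 (h i) p * a2 (h i) q * a3 (h i) s * a4 (h i) t else 0)"
      by (rule sum_reindex_pad[OF h assms(2), symmetric])
    also have "\<dots> = (\<Sum>i<M. b1 i p * b2 i q * b3 i s * b4 i t)"
      by (rule sum.cong) (auto simp: b1_def b2_def b3_def b4_def)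
    finally show "X p q s t = (\<Sum>i\<in>{..<M}. b1 i p * b2 i q * b3 i s * b4 i t)" by simp
  qed
  moreover have "costK N1 J N3 L {..<M} b1 b2 b3 b4 = costK N1 J N3 L K a1 a2 a3 a4"
  proof -
    have "costK N1 J N3 L {..<M} b1 b2 b3 b4 = (\<Sum>i<M. if i < card K then cterm N1 J N3 L a1 a2 a3 a4 (h i) else 0)"
      unfolding costK_def by (rule sum.cong) (auto simp: b1_def b2_def b3_def b4_def cterm_def z)
    also have "\<dots> = costK N1 J N3 L K a1 a2 a3 a4"
      unfolding costK_def by (rule sum_reindex_pad[OF h assms(2)])
    finally show ?thesis .
  qed
  ultimately show ?thesis by blast
qed

lemma exists_dec:
  fixes X :: "nat \<Rightarrow> nat \<Rightarrow> nat \<Rightarrow> nat \<Rightarrow> real"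
  shows "\<exists>K a1 a2 a3 a4. finite K \<and> card K = N1 * J * N3 * L \<and>
     decK N1 J N3 L X (K :: (nat \<times> nat \<times> nat \<times> nat) set) a1 a2 a3 a4"
proof -
  define A where "A = idxA N1 J N3 L"
  define a1 :: "nat \<times> nat \<times> nat \<times> nat \<Rightarrow> nat \<Rightarrow> real" where "a1 x p' = (case x of (p,q,s,t) \<Rightarrow> if p' = p then X p q s t else 0)" for x p'
  define a2 :: "nat \<times> nat \<times> nat \<times> nat \<Rightarrow> nat \<Rightarrow> real" where "a2 x q' = (case x of (p,q,s,t) \<Rightarrow> if q' = q then 1 else (0::real))" for x q'
  define a3 :: "nat \<times> nat \<times> nat \<times> nat \<Rightarrow> nat \<Rightarrow> real" where "a3 x s' = (case x of (p,q,s,t) \<Rightarrow> if s' = s then 1 else (0::real))" for x s'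
  define a4 :: "nat \<times> nat \<times> nat \<times> nat \<Rightarrow> nat \<Rightarrow> real" where "a4 x t' = (case x of (p,q,s,t) \<Rightarrow> if t' = t then 1 else (0::real))" for x t'
  have "decK N1 J N3 L X A a1 a2 a3 a4"
    unfolding decK_def
  proof (intro allI impI)
    fix p q s t assume pq: "p < N1" "q < J" "s < N3" "t < L"
    have e: "a1 x p * a2 x q * a3 x s * a4 x t = (if (p,q,s,t) = x then X p q s t else 0)" for x
      by (cases x) (auto simp: a1_def a2_def a3_def a4_def)
    have "(p,q,s,t) \<in> A" using pq by (simp add: A_def idxA_def)
    moreover have "finite A" by (simp add: A_def idxA_def)
    ultimately show "X p q s t = (\<Sum>x\<in>A. a1 x p * a2 x q * a3 x s * a4 x t)"
      by (simp add: e)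
  qed
  moreover have "finite A" "card A = N1 * J * N3 * L" by (simp_all add: A_def idxA_def card_idxA[unfolded idxA_def])
  ultimately show ?thesis by blast
qed


definition sc :: "nat \<Rightarrow> (nat \<Rightarrow> real) \<Rightarrow> real \<Rightarrow> nat \<Rightarrow> real" where
  "sc N a r p = (if p < N then r / vnorm2 N a * a p else 0)"

lemma sc_norm: assumes "vnorm2 N a > 0" "r \<ge> 0" shows "vnorm2 N (sc N a r) = r"
proof -
  have "vnorm2 N (sc N a r) = vnorm2 N (\<lambda>p. (r / vnorm2 N a) * a p)"
    by (rule vnorm2_cong) (simp add: sc_def)
  also have "\<dots> = r" using assms by (simp only: vnorm2_scale) simp
  finally show ?thesis .
qed

lemma sc_bound: assumes "vnorm2 N a > 0" "r \<ge> 0" shows "\<bar>sc N a r p\<bar> \<le> r"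
proof (cases "p < N")
  case True
  have "\<bar>sc N a r p\<bar> = r / vnorm2 N a * \<bar>a p\<bar>" using True assms by (simp add: sc_def abs_mult)
  also have "\<dots> \<le> r / vnorm2 N a * vnorm2 N a"
    using abs_le_vnorm2[OF True] assms by (intro mult_left_mono) auto
  also have "\<dots> = r" using assms by simp
  finally show ?thesis .
qed (use assms in \<open>simp add: sc_def\<close>)

lemma sc_val: "p < N \<Longrightarrow> sc N a r p = r / vnorm2 N a * a p" by (simp add: sc_def)

lemma zero_vec: "vnorm2 N a = 0 \<Longrightarrow> p < N \<Longrightarrow> a p = 0"
  using vnorm2_zero_iff by blast

lemma balance:
  fixes a1 a2 a3 a4 :: "nat \<Rightarrow> nat \<Rightarrow> real"
  assumes dec: "decK N1 J N3 L X {..<M} a1 a2 a3 a4"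
  shows "\<exists>b1 b2 b3 b4. decK N1 J N3 L X {..<M} b1 b2 b3 b4 \<and>
     costK N1 J N3 L {..<M} b1 b2 b3 b4 = costK N1 J N3 L {..<M} a1 a2 a3 a4 \<and>
     (\<forall>i p. \<bar>b1 i p\<bar> \<le> root 4 (costK N1 J N3 L {..<M} a1 a2 a3 a4)) \<and>
     (\<forall>i p. \<bar>b2 i p\<bar> \<le> root 4 (costK N1 J N3 L {..<M} a1 a2 a3 a4)) \<and>
     (\<forall>i p. \<bar>b3 i p\<bar> \<le> root 4 (costK N1 J N3 L {..<M} a1 a2 a3 a4)) \<and>
     (\<forall>i p. \<bar>b4 i p\<bar> \<le> root 4 (costK N1 J N3 L {..<M} a1 a2 a3 a4))"
proof -
  define c where "c = cterm N1 J N3 L a1 a2 a3 a4"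
  define C where "C = costK N1 J N3 L {..<M} a1 a2 a3 a4"
  have c0: "c i \<ge> 0" for i by (simp add: c_def cterm_nonneg)
  have cC: "c i \<le> C" if "i < M" for i
    unfolding C_def costK_def c_def[symmetric] using that c0 by (intro member_le_sum) auto
  have C0: "C \<ge> 0" unfolding C_def costK_def by (intro sum_nonneg) (simp add: cterm_nonneg)
  have npos: "vnorm2 N1 (a1 i) > 0 \<and> vnorm2 J (a2 i) > 0 \<and> vnorm2 N3 (a3 i) > 0 \<and> vnorm2 L (a4 i) > 0"
    if "c i > 0" for i
    using that vnorm2_nonneg[of N1 "a1 i"] vnorm2_nonneg[of J "a2 i"] vnorm2_nonneg[of N3 "a3 i"] vnorm2_nonneg[of L "a4 i"]
    by (auto simp: c_def cterm_def less_le)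
  define G where "G i = (i < M \<and> c i > 0)" for i
  define b1 where "b1 i = (if G i then sc N1 (a1 i) (root 4 (c i)) else (\<lambda>_. 0))" for i
  define b2 where "b2 i = (if G i then sc J (a2 i) (root 4 (c i)) else (\<lambda>_. 0))" for i
  define b3 where "b3 i = (if G i then sc N3 (a3 i) (root 4 (c i)) else (\<lambda>_. 0))" for i
  define b4 where "b4 i = (if G i then sc L (a4 i) (root 4 (c i)) else (\<lambda>_. 0))" for i
  have r0: "root 4 (c i) \<ge> 0" for i using c0 by simp
  have r4: "root 4 (c i) * root 4 (c i) * root 4 (c i) * root 4 (c i) = c i" for i
    using real_root_pow_pos2[of 4 "c i"] c0[of i] by (simp add: power4_eq_xxxx)
  have z: "vnorm2 n (\<lambda>_. 0) = 0" for n by (simp add: vnorm2_def)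
  have ct: "cterm N1 J N3 L b1 b2 b3 b4 i = c i" if "i < M" for i
  proof (cases "G i")
    case True
    then have "c i > 0" by (simp add: G_def)
    then show ?thesis using True npos[of i] r0[of i] r4[of i]
      by (simp add: cterm_def b1_def b2_def b3_def b4_def sc_norm)
  next
    case False
    then have "c i = 0" using that c0[of i] by (auto simp: G_def)
    then show ?thesis using False by (simp add: cterm_def b1_def b2_def b3_def b4_def z)
  qed
  have cost: "costK N1 J N3 L {..<M} b1 b2 b3 b4 = C"
    unfolding costK_def C_def c_def[symmetric] by (rule sum.cong) (auto simp: ct)
  have decb: "decK N1 J N3 L X {..<M} b1 b2 b3 b4"
    unfolding decK_def
  proof (intro allI impI)
    fix p q s t assume pq: "p < N1" "q < J" "s < N3" "t < L"
    have trm: "b1 i p * b2 i q * b3 i s * b4 i t = a1 i p * a2 i q * a3 i s * a4 i t" if "i < M" for i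
    proof (cases "G i")
      case True
      then have cp: "c i > 0" by (simp add: G_def)
      define n1 where "n1 = vnorm2 N1 (a1 i)"
      define n2 where "n2 = vnorm2 J (a2 i)"
      define n3 where "n3 = vnorm2 N3 (a3 i)"
      define n4 where "n4 = vnorm2 L (a4 i)"
      define r where "r = root 4 (c i)"
      have ci: "c i = n1 * n2 * n3 * n4" by (simp add: c_def cterm_def n1_def n2_def n3_def n4_def)
      have np: "n1 > 0" "n2 > 0" "n3 > 0" "n4 > 0" using npos[OF cp] by (simp_all add: n1_def n2_def n3_def n4_def)
      have "b1 i p * b2 i q * b3 i s * b4 i t
          = (r * r * r * r) / (n1 * n2 * n3 * n4) * (a1 i p * a2 i q * a3 i s * a4 i t)"
        using True pq by (simp add: b1_def b2_def b3_def b4_def sc_val n1_def n2_def n3_def n4_def r_def)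
      also have "r * r * r * r = n1 * n2 * n3 * n4" using r4[of i] ci by (simp add: r_def)
      finally show ?thesis using np by simp
    next
      case False
      then have "c i = 0" using that c0[of i] by (auto simp: G_def)
      then have "vnorm2 N1 (a1 i) = 0 \<or> vnorm2 J (a2 i) = 0 \<or> vnorm2 N3 (a3 i) = 0 \<or> vnorm2 L (a4 i) = 0"
        by (simp add: c_def cterm_def)
      then have "a1 i p * a2 i q * a3 i s * a4 i t = 0" using pq zero_vec by fastforce
      then show ?thesis using False by (simp add: b1_def b2_def b3_def b4_def)
    qed
    show "X p q s t = (\<Sum>i\<in>{..<M}. b1 i p * b2 i q * b3 i s * b4 i t)"
      using dec pq by (simp add: decK_def trm)
  qed
  have bnd: "\<bar>(if G i then sc N (a i) (root 4 (c i)) else (\<lambda>_. 0)) p\<bar> \<le> root 4 C"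
    if "\<And>i. c i > 0 \<Longrightarrow> vnorm2 N (a i) > 0" for N a i p
  proof (cases "G i")
    case True
    then have "\<bar>sc N (a i) (root 4 (c i)) p\<bar> \<le> root 4 (c i)"
      using that r0 by (intro sc_bound) (auto simp: G_def)
    also have "root 4 (c i) \<le> root 4 C" using cC True by (simp add: G_def)
    finally show ?thesis using True by simp
  qed (use C0 in simp)
  show ?thesis
    using decb cost npos
    by (intro exI[of _ b1] exI[of _ b2] exI[of _ b3] exI[of _ b4])
       (simp add: C_def[symmetric] b1_def b2_def b3_def b4_def bnd)
qed


lemma compact_PiE_UNIV:
  fixes S :: "'a \<Rightarrow> 'b::topological_space set"
  assumes "\<And>i. compact (S i)" shows "compact (PiE UNIV S)"
  using assms compactin_PiE[of "\<lambda>i. euclidean" UNIV S]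
  by (simp add: euclidean_product_topology compactin_euclidean_iff)

lemma mem_iv: "(x::real) \<in> {-B..B} \<longleftrightarrow> \<bar>x\<bar> \<le> B" by auto

definition Pset :: "real \<Rightarrow> (nat \<Rightarrow> nat \<Rightarrow> real) set" where
  "Pset B = {w. \<forall>i p. \<bar>w i p\<bar> \<le> B}"

lemma compact_Pset: "compact (Pset B)"
proof -
  have "Pset B = PiE UNIV (\<lambda>i. PiE UNIV (\<lambda>p. {-B..B}))"
    unfolding set_eq_iff Pset_def by (simp add: PiE_iff mem_iv del: atLeastAtMost_iff)
  then show ?thesis by (simp add: compact_PiE_UNIV)
qed

lemma cont_app2:
  fixes f :: "'a::topological_space \<Rightarrow> 'b \<Rightarrow> 'c \<Rightarrow> 'd::topological_space"
  assumes "continuous_on S f" shows "continuous_on S (\<lambda>x. f x i p)"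
  using continuous_on_product_then_coordinatewise[OF continuous_on_product_then_coordinatewise[OF assms]] .

type_synonym quad = "(nat \<Rightarrow> nat \<Rightarrow> real) \<times> (nat \<Rightarrow> nat \<Rightarrow> real) \<times> (nat \<Rightarrow> nat \<Rightarrow> real) \<times> (nat \<Rightarrow> nat \<Rightarrow> real)"

lemma cq1: "continuous_on S (\<lambda>w::quad. fst w i p)"
  by (rule cont_app2, intro continuous_intros)
lemma cq2: "continuous_on S (\<lambda>w::quad. fst (snd w) i p)"
  by (rule cont_app2, intro continuous_intros)
lemma cq3: "continuous_on S (\<lambda>w::quad. fst (snd (snd w)) i p)"
  by (rule cont_app2, intro continuous_intros)
lemma cq4: "continuous_on S (\<lambda>w::quad. snd (snd (snd w)) i p)"
  by (rule cont_app2, intro continuous_intros)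

definition Sset :: "nat \<Rightarrow> nat \<Rightarrow> nat \<Rightarrow> nat \<Rightarrow> (nat \<Rightarrow> nat \<Rightarrow> nat \<Rightarrow> nat \<Rightarrow> real) \<Rightarrow> real set" where
  "Sset N1 n2 n3 n4 X = {s. \<exists>(r::nat) (a1::(nat\<Rightarrow>nat\<Rightarrow>real)) (a2::(nat\<Rightarrow>nat\<Rightarrow>real)) (a3::(nat\<Rightarrow>nat\<Rightarrow>real)) (a4::(nat\<Rightarrow>nat\<Rightarrow>real)).
        s = (\<Sum>i<r. vnorm2 N1 (a1 i) * vnorm2 n2 (a2 i) * vnorm2 n3 (a3 i) * vnorm2 n4 (a4 i)) \<and>
        (\<forall>p<N1. \<forall>q<n2. \<forall>s<n3. \<forall>t<n4.
           X p q s t = (\<Sum>i<r. a1 i p * a2 i q * a3 i s * a4 i t))}"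

lemma nuc_Sset: "nuclear_norm4 N1 J N3 L X = Inf (Sset N1 J N3 L X)"
  by (simp add: nuclear_norm4_def Sset_def)

lemma Sset_iff: "s \<in> Sset N1 J N3 L X \<longleftrightarrow>
   (\<exists>(r::nat) a1 a2 a3 a4. s = costK N1 J N3 L {..<r} a1 a2 a3 a4 \<and> decK N1 J N3 L X {..<r} a1 a2 a3 a4)"
  by (simp add: Sset_def costK_def cterm_def decK_def)

lemma Sset_nonneg: "s \<in> Sset N1 J N3 L X \<Longrightarrow> s \<ge> 0"
  by (auto simp: Sset_iff costK_def intro!: sum_nonneg cterm_nonneg)

lemma Sset_ne: "Sset N1 J N3 L X \<noteq> {}"
proof -
  obtain K a1 a2 a3 a4 where "finite K" "card K = N1 * J * N3 * L"
      "decK N1 J N3 L X (K :: (nat \<times> nat \<times> nat \<times> nat) set) a1 a2 a3 a4"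
    using exists_dec[of N1 J N3 L X] by blast
  then obtain b1 b2 b3 b4 where "decK N1 J N3 L X {..<N1 * J * N3 * L} b1 b2 b3 b4"
    using to_lessThan[of K "N1 * J * N3 * L" N1 J N3 L X a1 a2 a3 a4] by auto
  then have "costK N1 J N3 L {..<N1 * J * N3 * L} b1 b2 b3 b4 \<in> Sset N1 J N3 L X"
    unfolding Sset_iff by blast
  then show ?thesis by blast
qed

lemma good:
  assumes "s \<in> Sset N1 J N3 L X"
  shows "\<exists>b1 b2 b3 b4. decK N1 J N3 L X {..<N1 * J * N3 * L} b1 b2 b3 b4 \<and>
     costK N1 J N3 L {..<N1 * J * N3 * L} b1 b2 b3 b4 \<le> s \<and>
     b1 \<in> Pset (root 4 s) \<and> b2 \<in> Pset (root 4 s) \<and> b3 \<in> Pset (root 4 s) \<and> b4 \<in> Pset (root 4 s)"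
proof -
  let ?M = "N1 * J * N3 * L"
  obtain r :: nat and a1 a2 a3 a4 where ra: "s = costK N1 J N3 L {..<r} a1 a2 a3 a4" "decK N1 J N3 L X {..<r} a1 a2 a3 a4"
    using assms by (auto simp: Sset_iff)
  obtain K' c1 where K': "finite K'" "card K' \<le> ?M" "decK N1 J N3 L X K' c1 a2 a3 a4"
    "costK N1 J N3 L K' c1 a2 a3 a4 \<le> s"
    using reduce[OF _ ra(2)] ra(1) by blast
  obtain d1 d2 d3 d4 where d: "decK N1 J N3 L X {..<?M} d1 d2 d3 d4"
    "costK N1 J N3 L {..<?M} d1 d2 d3 d4 = costK N1 J N3 L K' c1 a2 a3 a4"
    using to_lessThan[OF K'(1-3)] by blast
  obtain b1 b2 b3 b4 where b: "decK N1 J N3 L X {..<?M} b1 b2 b3 b4"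
     "costK N1 J N3 L {..<?M} b1 b2 b3 b4 = costK N1 J N3 L {..<?M} d1 d2 d3 d4"
     "\<forall>i p. \<bar>b1 i p\<bar> \<le> root 4 (costK N1 J N3 L {..<?M} d1 d2 d3 d4)"
     "\<forall>i p. \<bar>b2 i p\<bar> \<le> root 4 (costK N1 J N3 L {..<?M} d1 d2 d3 d4)"
     "\<forall>i p. \<bar>b3 i p\<bar> \<le> root 4 (costK N1 J N3 L {..<?M} d1 d2 d3 d4)"
     "\<forall>i p. \<bar>b4 i p\<bar> \<le> root 4 (costK N1 J N3 L {..<?M} d1 d2 d3 d4)"
    using balance[OF d(1)] by blast
  have le: "root 4 (costK N1 J N3 L {..<?M} d1 d2 d3 d4) \<le> root 4 s" using d(2) K'(4) by simp
  have P: "b1 \<in> Pset (root 4 s)" "b2 \<in> Pset (root 4 s)" "b3 \<in> Pset (root 4 s)" "b4 \<in> Pset (root 4 s)"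
    using b(3-6) le unfolding Pset_def mem_Collect_eq by (meson order_trans)+
  have "costK N1 J N3 L {..<?M} b1 b2 b3 b4 \<le> s" using b(2) d(2) K'(4) by simp
  then show ?thesis using b(1) P by blast
qed

lemma attain:
  fixes X :: "nat \<Rightarrow> nat \<Rightarrow> nat \<Rightarrow> nat \<Rightarrow> real"
  shows "\<exists>a1 a2 a3 a4. decK N1 J N3 L X {..<N1 * J * N3 * L} a1 a2 a3 a4 \<and>
     costK N1 J N3 L {..<N1 * J * N3 * L} a1 a2 a3 a4 = Inf (Sset N1 J N3 L X)"
proof -
  let ?M = "N1 * J * N3 * L"
  let ?S = "Sset N1 J N3 L X"
  obtain s0 where s0: "s0 \<in> ?S" using Sset_ne by blast
  define B where "B = root 4 s0"
  define W where "W = Pset B \<times> Pset B \<times> Pset B \<times> Pset B"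
  define Q where "Q = {w :: (nat \<Rightarrow> nat \<Rightarrow> real) \<times> (nat \<Rightarrow> nat \<Rightarrow> real) \<times> (nat \<Rightarrow> nat \<Rightarrow> real) \<times> (nat \<Rightarrow> nat \<Rightarrow> real).
     decK N1 J N3 L X {..<?M} (fst w) (fst (snd w)) (fst (snd (snd w))) (snd (snd (snd w)))}"
  define F where "F = W \<inter> Q"
  define g where "g w = costK N1 J N3 L {..<?M} (fst w) (fst (snd w)) (fst (snd (snd w))) (snd (snd (snd w)))"
    for w :: "(nat \<Rightarrow> nat \<Rightarrow> real) \<times> (nat \<Rightarrow> nat \<Rightarrow> real) \<times> (nat \<Rightarrow> nat \<Rightarrow> real) \<times> (nat \<Rightarrow> nat \<Rightarrow> real)"
  have cW: "compact W" unfolding W_def by (intro compact_Times compact_Pset)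
  have "Q = (\<Inter>p\<in>{..<N1}. \<Inter>q\<in>{..<J}. \<Inter>s\<in>{..<N3}. \<Inter>t\<in>{..<L}. {w. X p q s t =
      (\<Sum>i<?M. fst w i p * fst (snd w) i q * fst (snd (snd w)) i s * snd (snd (snd w)) i t)})"
    unfolding Q_def decK_def set_eq_iff by (simp only: INT_iff mem_Collect_eq lessThan_iff) blast
  moreover have "closed \<dots>"
    by (intro closed_INT ballI closed_Collect_eq continuous_intros cq1 cq2 cq3 cq4)
  ultimately have "closed Q" by simp
  then have cF: "compact F" unfolding F_def using cW by (simp add: compact_Int_closed)
  have gc: "continuous_on F g"
    unfolding g_def costK_def cterm_def vnorm2_def
    by (intro continuous_intros cq1 cq2 cq3 cq4)
  have mem: "\<exists>w\<in>F. g w \<le> s" if s_in: "s \<in> ?S" and s_le: "s \<le> s0" for s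
  proof -
    obtain b1 b2 b3 b4 :: "nat \<Rightarrow> nat \<Rightarrow> real" where b: "decK N1 J N3 L X {..<?M} b1 b2 b3 b4"
      "costK N1 J N3 L {..<?M} b1 b2 b3 b4 \<le> s"
      "b1 \<in> Pset (root 4 s)" "b2 \<in> Pset (root 4 s)" "b3 \<in> Pset (root 4 s)" "b4 \<in> Pset (root 4 s)"
      using good[OF s_in] by blast
    have "root 4 s \<le> B" unfolding B_def using s_le by simp
    then have sub: "Pset (root 4 s) \<subseteq> Pset B"
      unfolding Pset_def by (auto intro: order_trans)
    have "(b1, b2, b3, b4) \<in> F" using b sub by (auto simp: F_def W_def Q_def)
    moreover have "g (b1, b2, b3, b4) \<le> s" using b by (simp add: g_def)
    ultimately show ?thesis by blast
  qed
  have "F \<noteq> {}" using mem[OF s0] by auto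
  from continuous_attains_inf[OF cF this gc] obtain w where w: "w \<in> F" "\<And>y. y \<in> F \<Longrightarrow> g w \<le> g y"
    by blast
  have inS: "g w \<in> ?S" using w(1) unfolding Sset_iff F_def Q_def g_def by blast
  have low: "g w \<le> s" if "s \<in> ?S" for s
  proof -
    have "min s s0 \<in> ?S" using that s0 by (simp add: min_def)
    moreover have "min s s0 \<le> s0" by simp
    ultimately obtain y where "y \<in> F" "g y \<le> min s s0" using mem by blast
    then show ?thesis using w(2)[of y] by simp
  qed
  have "Inf ?S = g w" by (rule cInf_eq_minimum[OF inS low])
  then show ?thesis using w(1) unfolding F_def Q_def g_def by auto
qed


lemma sum_sq_swap:
  fixes U :: "nat \<Rightarrow> nat \<Rightarrow> real"
  shows "(\<Sum>i<N. \<Sum>d<D. (U i d * c d)\<^sup>2) = (\<Sum>d<D. (\<Sum>i<N. (U i d)\<^sup>2) * (c d)\<^sup>2)"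
  by (subst sum.swap) (simp add: power_mult_distrib sum_distrib_right)

lemma obj_formula:
  assumes "J \<ge> 1" "L \<ge> 1"
  shows "fact_objective N1 J N3 L D U V Rt Tt =
    (\<Sum>d<D. vnorm2 N1 (\<lambda>i. U i d) * vnorm2 J (\<lambda>j. Rt j d) * vnorm2 N3 (\<lambda>k. V k d) * vnorm2 L (\<lambda>l. Tt l d))
    + 1 / (4 * sqrt (real J * real L)) *
      (\<Sum>d<D. (sqrt (real L) * vnorm2 N1 (\<lambda>i. U i d) * vnorm2 J (\<lambda>j. Rt j d)
                - sqrt (real J) * vnorm2 N3 (\<lambda>k. V k d) * vnorm2 L (\<lambda>l. Tt l d))\<^sup>2
             + (sqrt (real J) * vnorm2 N1 (\<lambda>i. U i d) * vnorm2 L (\<lambda>l. Tt l d)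
                - sqrt (real L) * vnorm2 N3 (\<lambda>k. V k d) * vnorm2 J (\<lambda>j. Rt j d))\<^sup>2)"
proof -
  define nU where "nU d = vnorm2 N1 (\<lambda>i. U i d)" for d
  define nR where "nR d = vnorm2 J (\<lambda>j. Rt j d)" for d
  define nV where "nV d = vnorm2 N3 (\<lambda>k. V k d)" for d
  define nT where "nT d = vnorm2 L (\<lambda>l. Tt l d)" for d
  define sJ where "sJ = sqrt (real J)"
  define sL where "sL = sqrt (real L)"
  have sJ: "sJ * sJ = real J" "sJ > 0" using assms by (auto simp: sJ_def)
  have sL: "sL * sL = real L" "sL > 0" using assms by (auto simp: sL_def)
  have sJL: "sqrt (real J * real L) = sJ * sL" by (simp add: sJ_def sL_def real_sqrt_mult)
  have inner: "(\<Sum>i<N1. \<Sum>d<D. (U i d * Rt j d)\<^sup>2) + (\<Sum>k<N3. \<Sum>d<D. (V k d * Tt l d)\<^sup>2)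
      + (\<Sum>i<N1. \<Sum>d<D. (U i d * Tt l d)\<^sup>2) + (\<Sum>k<N3. \<Sum>d<D. (V k d * Rt j d)\<^sup>2)
    = (\<Sum>d<D. (nU d)\<^sup>2 * (Rt j d)\<^sup>2 + (nV d)\<^sup>2 * (Tt l d)\<^sup>2 + (nU d)\<^sup>2 * (Tt l d)\<^sup>2 + (nV d)\<^sup>2 * (Rt j d)\<^sup>2)" for j l
    by (simp add: sum_sq_swap nU_def nV_def vnorm2_sq sum.distrib)
  have outer: "(\<Sum>l<L. \<Sum>j<J. \<Sum>d<D. (nU d)\<^sup>2 * (Rt j d)\<^sup>2 + (nV d)\<^sup>2 * (Tt l d)\<^sup>2 + (nU d)\<^sup>2 * (Tt l d)\<^sup>2 + (nV d)\<^sup>2 * (Rt j d)\<^sup>2)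
     = (\<Sum>d<D. real L * (nU d)\<^sup>2 * (nR d)\<^sup>2 + real J * (nV d)\<^sup>2 * (nT d)\<^sup>2 + real J * (nU d)\<^sup>2 * (nT d)\<^sup>2 + real L * (nV d)\<^sup>2 * (nR d)\<^sup>2)"
  proof -
    have "(\<Sum>l<L. \<Sum>j<J. \<Sum>d<D. (nU d)\<^sup>2 * (Rt j d)\<^sup>2 + (nV d)\<^sup>2 * (Tt l d)\<^sup>2 + (nU d)\<^sup>2 * (Tt l d)\<^sup>2 + (nV d)\<^sup>2 * (Rt j d)\<^sup>2)
       = (\<Sum>d<D. \<Sum>l<L. \<Sum>j<J. (nU d)\<^sup>2 * (Rt j d)\<^sup>2 + (nV d)\<^sup>2 * (Tt l d)\<^sup>2 + (nU d)\<^sup>2 * (Tt l d)\<^sup>2 + (nV d)\<^sup>2 * (Rt j d)\<^sup>2)"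
      by (simp add: sum.swap[of _ "{..<J}" "{..<D}"] sum.swap[of _ "{..<L}" "{..<D}"])
    also have "\<dots> = (\<Sum>d<D. real L * (nU d)\<^sup>2 * (nR d)\<^sup>2 + real J * (nV d)\<^sup>2 * (nT d)\<^sup>2 + real J * (nU d)\<^sup>2 * (nT d)\<^sup>2 + real L * (nV d)\<^sup>2 * (nR d)\<^sup>2)"
      by (simp add: sum.distrib nR_def nT_def vnorm2_sq sum_distrib_left[symmetric] sum_distrib_right[symmetric] algebra_simps)
    finally show ?thesis .
  qed
  have pt: "real L * (nU d)\<^sup>2 * (nR d)\<^sup>2 + real J * (nV d)\<^sup>2 * (nT d)\<^sup>2 + real J * (nU d)\<^sup>2 * (nT d)\<^sup>2 + real L * (nV d)\<^sup>2 * (nR d)\<^sup>2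
     = 4 * (sJ * sL) * (nU d * nR d * nV d * nT d) + ((sL * nU d * nR d - sJ * nV d * nT d)\<^sup>2 + (sJ * nU d * nT d - sL * nV d * nR d)\<^sup>2)" for d
    unfolding sJ(1)[symmetric] sL(1)[symmetric] by (simp add: power2_eq_square algebra_simps)
  have "fact_objective N1 J N3 L D U V Rt Tt = 1 / (4 * (sJ * sL)) *
      (\<Sum>d<D. 4 * (sJ * sL) * (nU d * nR d * nV d * nT d) + ((sL * nU d * nR d - sJ * nV d * nT d)\<^sup>2 + (sJ * nU d * nT d - sL * nV d * nR d)\<^sup>2))"
    unfolding fact_objective_def sJL inner outer pt ..
  also have "\<dots> = (\<Sum>d<D. nU d * nR d * nV d * nT d) + 1 / (4 * (sJ * sL)) *
      (\<Sum>d<D. (sL * nU d * nR d - sJ * nV d * nT d)\<^sup>2 + (sJ * nU d * nT d - sL * nV d * nR d)\<^sup>2)"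
    using sJ(2) sL(2) by (simp add: sum.distrib distrib_left sum_distrib_left[symmetric])
  finally show ?thesis
    by (simp add: nU_def nR_def nV_def nT_def sJ_def sL_def sJL[unfolded sJ_def sL_def] mult.commute mult.left_commute mult.assoc)
qed

lemma fact_in_S:
  assumes "is_factorization N1 J N3 L X D U V Rt Tt"
  shows "(\<Sum>d<D. vnorm2 N1 (\<lambda>i. U i d) * vnorm2 J (\<lambda>j. Rt j d) * vnorm2 N3 (\<lambda>k. V k d) * vnorm2 L (\<lambda>l. Tt l d))
     \<in> Sset N1 J N3 L X"
  unfolding Sset_def mem_Collect_eq
  apply (rule exI[of _ D], rule exI[of _ "\<lambda>d i. U i d"], rule exI[of _ "\<lambda>d j. Rt j d"],
         rule exI[of _ "\<lambda>d k. V k d"], rule exI[of _ "\<lambda>d l. Tt l d"])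
  using assms by (simp add: is_factorization_def mult_ac)

lemma nuc_le: "s \<in> Sset N1 J N3 L X \<Longrightarrow> nuclear_norm4 N1 J N3 L X \<le> s"
  unfolding nuc_Sset
  by (rule cInf_lower) (auto intro!: bdd_belowI[of _ 0] Sset_nonneg)

lemma construct:
  assumes JL: "J \<ge> 1" "L \<ge> 1" and dec: "decK N1 J N3 L X {..<M} a1 a2 a3 a4"
  shows "\<exists>U V Rt Tt. is_factorization N1 J N3 L X M U V Rt Tt \<and>
     fact_objective N1 J N3 L M U V Rt Tt = costK N1 J N3 L {..<M} a1 a2 a3 a4"
proof -
  define c where "c = cterm N1 J N3 L a1 a2 a3 a4"
  define n1 where "n1 d = vnorm2 N1 (a1 d)" for d
  define n2 where "n2 d = vnorm2 J (a2 d)" for d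
  define n3 where "n3 d = vnorm2 N3 (a3 d)" for d
  define n4 where "n4 d = vnorm2 L (a4 d)" for d
  define sJ where "sJ = sqrt (real J)"
  define sL where "sL = sqrt (real L)"
  have sJ: "sJ > 0" using JL by (simp add: sJ_def)
  have sL: "sL > 0" using JL by (simp add: sL_def)
  have c0: "c d \<ge> 0" for d by (simp add: c_def cterm_nonneg)
  have cn: "c d = n1 d * n2 d * n3 d * n4 d" for d by (simp add: c_def cterm_def n1_def n2_def n3_def n4_def)
  have npos: "n1 d > 0 \<and> n2 d > 0 \<and> n3 d > 0 \<and> n4 d > 0" if "c d > 0" for d
    using that vnorm2_nonneg[of N1 "a1 d"] vnorm2_nonneg[of J "a2 d"] vnorm2_nonneg[of N3 "a3 d"] vnorm2_nonneg[of L "a4 d"]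
    by (auto simp: c_def cterm_def less_le n1_def n2_def n3_def n4_def)
  define \<rho> where "\<rho> d = sqrt (c d / (sJ * sL))" for d
  have \<rho>0: "\<rho> d \<ge> 0" for d using c0[of d] sJ sL by (simp add: \<rho>_def)
  have \<rho>sq: "\<rho> d * \<rho> d * (sJ * sL) = c d" for d
    using c0[of d] sJ sL by (simp add: \<rho>_def)
  define \<alpha> where "\<alpha> d = (if c d > 0 then \<rho> d / n1 d else 0)" for d
  define \<beta> where "\<beta> d = (if c d > 0 then sJ / n2 d else 0)" for d
  define \<gamma> where "\<gamma> d = (if c d > 0 then \<rho> d / n3 d else 0)" for d
  define \<delta> where "\<delta> d = (if c d > 0 then sL / n4 d else 0)" for d
  define U where "U i d = \<alpha> d * a1 d i" for i d
  define Rt where "Rt j d = \<beta> d * a2 d j" for j d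
  define V where "V k d = \<gamma> d * a3 d k" for k d
  define Tt where "Tt l d = \<delta> d * a4 d l" for l d
  have fac: "is_factorization N1 J N3 L X M U V Rt Tt"
    unfolding is_factorization_def
  proof (intro allI impI)
    fix i j k l assume ijkl: "i < N1" "j < J" "k < N3" "l < L"
    have eq: "U i d * (Rt j d * Tt l d) * V k d = a1 d i * a2 d j * a3 d k * a4 d l" for d
    proof (cases "c d > 0")
      case True
      note np = npos[OF True]
      have "U i d * (Rt j d * Tt l d) * V k d
          = (\<rho> d * \<rho> d * (sJ * sL)) / (n1 d * n2 d * n3 d * n4 d) * (a1 d i * a2 d j * a3 d k * a4 d l)"
        using True np by (simp add: U_def Rt_def V_def Tt_def \<alpha>_def \<beta>_def \<gamma>_def \<delta>_def; simp add: mult_ac)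
      also have "\<dots> = a1 d i * a2 d j * a3 d k * a4 d l"
        using np True by (simp add: \<rho>sq cn[symmetric])
      finally show ?thesis .
    next
      case False
      then have "c d = 0" using c0[of d] by simp
      then have "n1 d = 0 \<or> n2 d = 0 \<or> n3 d = 0 \<or> n4 d = 0" by (simp add: cn)
      then have "a1 d i * a2 d j * a3 d k * a4 d l = 0"
        using ijkl zero_vec unfolding n1_def n2_def n3_def n4_def by fastforce
      then show ?thesis using False by (simp add: U_def \<alpha>_def)
    qed
    show "X i j k l = (\<Sum>d<M. U i d * (Rt j d * Tt l d) * V k d)"
      using dec ijkl by (simp add: decK_def eq)
  qed
  have nU: "vnorm2 N1 (\<lambda>i. U i d) = (if c d > 0 then \<rho> d else 0)" for d
    unfolding U_def vnorm2_scale using npos[of d] \<rho>0[of d] by (cases "c d > 0") (simp_all add: \<alpha>_def n1_def[symmetric])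
  have nR: "vnorm2 J (\<lambda>j. Rt j d) = (if c d > 0 then sJ else 0)" for d
    unfolding Rt_def vnorm2_scale using npos[of d] sJ by (cases "c d > 0") (simp_all add: \<beta>_def n2_def[symmetric])
  have nV: "vnorm2 N3 (\<lambda>k. V k d) = (if c d > 0 then \<rho> d else 0)" for d
    unfolding V_def vnorm2_scale using npos[of d] \<rho>0[of d] by (cases "c d > 0") (simp_all add: \<gamma>_def n3_def[symmetric])
  have nT: "vnorm2 L (\<lambda>l. Tt l d) = (if c d > 0 then sL else 0)" for d
    unfolding Tt_def vnorm2_scale using npos[of d] sL by (cases "c d > 0") (simp_all add: \<delta>_def n4_def[symmetric])
  have prod: "vnorm2 N1 (\<lambda>i. U i d) * vnorm2 J (\<lambda>j. Rt j d) * vnorm2 N3 (\<lambda>k. V k d) * vnorm2 L (\<lambda>l. Tt l d) = c d" for d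
  proof (cases "c d > 0")
    case True
    then show ?thesis using \<rho>sq[of d] by (simp add: nU nR nV nT mult_ac)
  next
    case False then show ?thesis using c0[of d] by (simp add: nU nR nV nT)
  qed
  have sq: "(sqrt (real L) * vnorm2 N1 (\<lambda>i. U i d) * vnorm2 J (\<lambda>j. Rt j d)
                - sqrt (real J) * vnorm2 N3 (\<lambda>k. V k d) * vnorm2 L (\<lambda>l. Tt l d))\<^sup>2
             + (sqrt (real J) * vnorm2 N1 (\<lambda>i. U i d) * vnorm2 L (\<lambda>l. Tt l d)
                - sqrt (real L) * vnorm2 N3 (\<lambda>k. V k d) * vnorm2 J (\<lambda>j. Rt j d))\<^sup>2 = 0" for d
    by (simp add: nU nR nV nT sJ_def[symmetric] sL_def[symmetric] mult_ac)
  have "fact_objective N1 J N3 L M U V Rt Tt = costK N1 J N3 L {..<M} a1 a2 a3 a4"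
    unfolding obj_formula[OF JL] sq prod by (simp add: costK_def c_def)
  with fac show ?thesis by blast
qed

theorem theorem3:
  fixes N1 J N3 L :: nat and X :: "nat \<Rightarrow> nat \<Rightarrow> nat \<Rightarrow> nat \<Rightarrow> real"
  assumes "N1 \<ge> 1" "J \<ge> 1" "N3 \<ge> 1" "L \<ge> 1"
  shows "(\<exists>D U V Rt Tt. is_factorization N1 J N3 L X D U V Rt Tt \<and>
            fact_objective N1 J N3 L D U V Rt Tt = nuclear_norm4 N1 J N3 L X)
       \<and> (\<forall>D U V Rt Tt. is_factorization N1 J N3 L X D U V Rt Tt \<longrightarrow>
            nuclear_norm4 N1 J N3 L X \<le> fact_objective N1 J N3 L D U V Rt Tt)
       \<and> (\<forall>D U V Rt Tt. is_factorization N1 J N3 L X D U V Rt Tt \<and>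
            fact_objective N1 J N3 L D U V Rt Tt = nuclear_norm4 N1 J N3 L X \<longrightarrow>
            (\<forall>d<D.
              sqrt (real L) * vnorm2 N1 (\<lambda>i. U i d) * vnorm2 J (\<lambda>j. Rt j d)
                = sqrt (real J) * vnorm2 N3 (\<lambda>k. V k d) * vnorm2 L (\<lambda>l. Tt l d)
            \<and> sqrt (real J) * vnorm2 N1 (\<lambda>i. U i d) * vnorm2 L (\<lambda>l. Tt l d)
                = sqrt (real L) * vnorm2 N3 (\<lambda>k. V k d) * vnorm2 J (\<lambda>j. Rt j d)))"
proof (intro conjI allI impI)
  have JL: "J \<ge> 1" "L \<ge> 1" using assms by auto
  have kpos: "1 / (4 * sqrt (real J * real L)) > 0" using JL by simp
  obtain a1 a2 a3 a4 where a: "decK N1 J N3 L X {..<N1 * J * N3 * L} a1 a2 a3 a4"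
    "costK N1 J N3 L {..<N1 * J * N3 * L} a1 a2 a3 a4 = Inf (Sset N1 J N3 L X)"
    using attain[of N1 J N3 L X] by blast
  obtain U V Rt Tt where uv: "is_factorization N1 J N3 L X (N1 * J * N3 * L) U V Rt Tt"
    "fact_objective N1 J N3 L (N1 * J * N3 * L) U V Rt Tt = costK N1 J N3 L {..<N1 * J * N3 * L} a1 a2 a3 a4"
    using construct[OF JL a(1)] by blast
  show "\<exists>D U V Rt Tt. is_factorization N1 J N3 L X D U V Rt Tt \<and>
            fact_objective N1 J N3 L D U V Rt Tt = nuclear_norm4 N1 J N3 L X"
    apply (rule exI[of _ "N1 * J * N3 * L"], rule exI[of _ U], rule exI[of _ V], rule exI[of _ Rt], rule exI[of _ Tt])
    using uv a(2) by (simp add: nuc_Sset)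
  fix D :: nat and U V Rt Tt :: "nat \<Rightarrow> nat \<Rightarrow> real"
  let ?P = "\<Sum>d<D. vnorm2 N1 (\<lambda>i. U i d) * vnorm2 J (\<lambda>j. Rt j d) * vnorm2 N3 (\<lambda>k. V k d) * vnorm2 L (\<lambda>l. Tt l d)"
  let ?q = "\<lambda>d. (sqrt (real L) * vnorm2 N1 (\<lambda>i. U i d) * vnorm2 J (\<lambda>j. Rt j d)
                - sqrt (real J) * vnorm2 N3 (\<lambda>k. V k d) * vnorm2 L (\<lambda>l. Tt l d))\<^sup>2
             + (sqrt (real J) * vnorm2 N1 (\<lambda>i. U i d) * vnorm2 L (\<lambda>l. Tt l d)
                - sqrt (real L) * vnorm2 N3 (\<lambda>k. V k d) * vnorm2 J (\<lambda>j. Rt j d))\<^sup>2"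
  have obj: "fact_objective N1 J N3 L D U V Rt Tt = ?P + 1 / (4 * sqrt (real J * real L)) * (\<Sum>d<D. ?q d)"
    by (rule obj_formula[OF JL])
  have q0: "(\<Sum>d<D. ?q d) \<ge> 0" by (intro sum_nonneg) simp
  {
    assume f: "is_factorization N1 J N3 L X D U V Rt Tt"
    have "nuclear_norm4 N1 J N3 L X \<le> ?P" by (rule nuc_le[OF fact_in_S[OF f]])
    also have "?P \<le> fact_objective N1 J N3 L D U V Rt Tt" using obj q0 kpos by simp
    finally show "nuclear_norm4 N1 J N3 L X \<le> fact_objective N1 J N3 L D U V Rt Tt" .
  }
  {
    fix d
    assume h: "is_factorization N1 J N3 L X D U V Rt Tt \<and>
            fact_objective N1 J N3 L D U V Rt Tt = nuclear_norm4 N1 J N3 L X" and dD: "d < D"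
    have "nuclear_norm4 N1 J N3 L X \<le> ?P" using h by (intro nuc_le fact_in_S) blast
    then have "1 / (4 * sqrt (real J * real L)) * (\<Sum>d<D. ?q d) \<le> 0" using h obj by simp
    then have "1 / (4 * sqrt (real J * real L)) * (\<Sum>d<D. ?q d) \<le> 1 / (4 * sqrt (real J * real L)) * 0" by simp
    then have "(\<Sum>d<D. ?q d) \<le> 0" using mult_le_cancel_left_pos[OF kpos] by blast
    then have "(\<Sum>d<D. ?q d) = 0" using q0 by simp
    then have "?q d = 0" using dD by (subst (asm) sum_nonneg_eq_0_iff) auto
    then have "(sqrt (real L) * vnorm2 N1 (\<lambda>i. U i d) * vnorm2 J (\<lambda>j. Rt j d)
                - sqrt (real J) * vnorm2 N3 (\<lambda>k. V k d) * vnorm2 L (\<lambda>l. Tt l d))\<^sup>2 = 0 \<and>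
              (sqrt (real J) * vnorm2 N1 (\<lambda>i. U i d) * vnorm2 L (\<lambda>l. Tt l d)
                - sqrt (real L) * vnorm2 N3 (\<lambda>k. V k d) * vnorm2 J (\<lambda>j. Rt j d))\<^sup>2 = 0"
      by (simp add: add_nonneg_eq_0_iff)
    note both = this
    from both show "sqrt (real L) * vnorm2 N1 (\<lambda>i. U i d) * vnorm2 J (\<lambda>j. Rt j d)
                = sqrt (real J) * vnorm2 N3 (\<lambda>k. V k d) * vnorm2 L (\<lambda>l. Tt l d)" by simp
    from both show "sqrt (real J) * vnorm2 N1 (\<lambda>i. U i d) * vnorm2 L (\<lambda>l. Tt l d)
                = sqrt (real L) * vnorm2 N3 (\<lambda>k. V k d) * vnorm2 J (\<lambda>j. Rt j d)" by simp
  }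
qed

end
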